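(* Let $m\in\mathbb N$, $M\in{\rm Mat}_m(\mathbb Z)$, and $n_1,n_2\in\mathbb N$ with $\gcd(n_1,n_2)=1$. Then $\Gamma_{M,\,n_1n_2}$ is isomorphic (as a directed graph) to the tensor product $\Gamma_{M,\,n_1}\times\Gamma_{M,\,n_2}$.
   Context: $\mathbb N$ is the set of positive integers and $\mathbb Z_n$ the integers modulo $n$. For $M\in{\rm Mat}_m(\mathbb Z)$, the move graph $\Gamma_{M,\,n}$ is the directed graph with vertex set $\mathbb Z_n^m$ and arc set $\{({\bf x},{\bf y}) : {\bf y}^T=M{\bf x}^T \text{ in } \mathbb Z_n^m\}$ (loops allowed). The tensor product $\Delta_1\times\Delta_2$ of directed graphs is the directed graph whose adjacency matrix is the Kronecker product of the adjacency matrices of $\Delta_1$ and $\Delta_2$; equivalently, its vertex set is $V(\Delta_1)\times V(\Delta_2)$ and $((u_1,u_2),(w_1,w_2))$ is an arc iff $(u_1,w_1)$ is an arc of $\Delta_1$ and $(u_2,w_2)$ is an arc of $\Delta_2$. *)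

theory Defs
  imports "HOL-Analysis.Finite_Cartesian_Product"
begin

text \<open>A directed graph (loops allowed) is represented by a pair (V, A) of a vertex
set V and an arc relation A, a set of ordered pairs of vertices.\<close>

type_synonym 'v digraph = "'v set \<times> ('v \<times> 'v) set"

text \<open>Vertices of Z_n^m: integer vectors indexed by the finite type 'm (so m = CARD('m))
with every entry a canonical residue in {0..<n}.\<close>

definition zn_vectors :: "nat \<Rightarrow> (int ^ 'm) set" where
  "zn_vectors n = {x. \<forall>i. x $ i \<in> {0..<int n}}"

definition move_graph :: "int ^ 'm ^ 'm \<Rightarrow> nat \<Rightarrow> (int ^ 'm) digraph" where
  "move_graph M n =
     (zn_vectors n,
      {(x, y). x \<in> zn_vectors n \<and> y \<in> zn_vectors n \<and>
               (\<forall>i. y $ i = (M *v x) $ i mod int n)})"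

definition tensor_product :: "'a digraph \<Rightarrow> 'b digraph \<Rightarrow> ('a \<times> 'b) digraph" where
  "tensor_product G H =
     (fst G \<times> fst H,
      {((u1, u2), (w1, w2)). (u1, w1) \<in> snd G \<and> (u2, w2) \<in> snd H})"

definition digraph_iso :: "'a digraph \<Rightarrow> 'b digraph \<Rightarrow> bool" where
  "digraph_iso G H \<longleftrightarrow>
     (\<exists>f. bij_betw f (fst G) (fst H) \<and>
          (\<forall>u\<in>fst G. \<forall>w\<in>fst G. (u, w) \<in> snd G \<longleftrightarrow> (f u, f w) \<in> snd H))"

end

theory Submission
  imports Defs "HOL-Number_Theory.Cong"
begin

lemma vec_eqI: "(\<And>i. x $ i = y $ i) \<Longrightarrow> x = y"
  by (simp add: vec_eq_iff)

lemma scal_iff: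
  fixes a b :: int and n1 n2 :: nat
  assumes "coprime n1 n2" "0 \<le> a" "a < int (n1*n2)"
  shows "a = b mod int (n1*n2) \<longleftrightarrow> (a mod int n1 = b mod int n1 \<and> a mod int n2 = b mod int n2)"
proof
  assume h: "a = b mod int (n1*n2)"
  show "a mod int n1 = b mod int n1 \<and> a mod int n2 = b mod int n2"
    unfolding h by (simp add: mod_mod_cancel)
next
  assume h: "a mod int n1 = b mod int n1 \<and> a mod int n2 = b mod int n2"
  have c: "coprime (int n1) (int n2)" using assms(1) by simp
  have "[a = b] (mod int n1 * int n2)"
    using coprime_cong_mult[OF _ _ c] h unfolding cong_def by blast
  then have "a mod int (n1*n2) = b mod int (n1*n2)" unfolding cong_def by simp
  moreover have "a mod int (n1*n2) = a" using assms by simp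
  ultimately show "a = b mod int (n1*n2)" by simp
qed

lemma mv_mod:
  fixes M :: "int ^ 'm ^ 'm" and x :: "int ^ 'm"
  shows "(M *v (\<chi> j. x $ j mod k)) $ i mod k = (M *v x) $ i mod k"
proof -
  have "(M *v (\<chi> j. x $ j mod k)) $ i mod k = (\<Sum>j\<in>UNIV. M $ i $ j * (x $ j mod k)) mod k"
    by (simp add: matrix_vector_mult_def)
  also have "\<dots> = (\<Sum>j\<in>UNIV. (M $ i $ j * (x $ j mod k)) mod k) mod k"
    by (simp add: mod_sum_eq)
  also have "\<dots> = (\<Sum>j\<in>UNIV. (M $ i $ j * x $ j) mod k) mod k"
    by (simp add: mod_mult_right_eq)
  also have "\<dots> = (\<Sum>j\<in>UNIV. M $ i $ j * x $ j) mod k"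
    by (simp add: mod_sum_eq)
  also have "\<dots> = (M *v x) $ i mod k" by (simp add: matrix_vector_mult_def)
  finally show ?thesis .
qed

theorem theorem3p4:
  fixes M :: "int ^ 'm ^ 'm" and n1 n2 :: nat
  assumes "n1 \<ge> 1" and "n2 \<ge> 1" and "coprime n1 n2"
  shows "digraph_iso (move_graph M (n1 * n2))
           (tensor_product (move_graph M n1) (move_graph M n2))"
proof -
  define f where "f = (\<lambda>x::int^'m. ((\<chi> i. x $ i mod int n1), (\<chi> i. x $ i mod int n2)))"
  have c: "coprime (int n1) (int n2)" using assms(3) by simp
  have fin: "f ` zn_vectors (n1*n2) \<subseteq> (zn_vectors n1 :: (int^'m) set) \<times> (zn_vectors n2 :: (int^'m) set)"
    using assms(1,2) by (auto simp: f_def zn_vectors_def)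
  have inj: "inj_on f (zn_vectors (n1*n2))"
  proof (rule inj_onI)
    fix x y assume x: "x \<in> zn_vectors (n1*n2)" and y: "y \<in> zn_vectors (n1*n2)" and e: "f x = f y"
    show "x = y"
    proof (rule vec_eqI)
      fix i
      have e1: "x $ i mod int n1 = y $ i mod int n1" and e2: "x $ i mod int n2 = y $ i mod int n2"
        using e unfolding f_def by (auto simp: fun_eq_iff)
      have "x $ i = y $ i mod int (n1*n2)"
        using scal_iff[OF assms(3), of "x $ i" "y $ i"] x e1 e2 unfolding zn_vectors_def by auto
      moreover have "y $ i mod int (n1*n2) = y $ i" using y unfolding zn_vectors_def by auto
      ultimately show "x $ i = y $ i" by simp
    qed
  qed
  have surj: "zn_vectors n1 \<times> zn_vectors n2 \<subseteq> f ` zn_vectors (n1*n2)"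
  proof
    fix p :: "(int ^ 'm) \<times> (int ^ 'm)" assume p: "p \<in> zn_vectors n1 \<times> zn_vectors n2"
    obtain a b :: "int ^ 'm" where ab: "p = (a, b)" by force
    have "\<forall>i. \<exists>z. [z = a $ i] (mod int n1) \<and> [z = b $ i] (mod int n2)"
      using binary_chinese_remainder_int[OF c] by blast
    then obtain g where g: "\<And>i. [g i = a $ i] (mod int n1) \<and> [g i = b $ i] (mod int n2)" by metis
    define x :: "int ^ 'm" where "x = (\<chi> i. g i mod int (n1*n2))"
    have xz: "x \<in> zn_vectors (n1*n2)" using assms(1,2) by (simp add: x_def zn_vectors_def)
    have "f x = (a, b)"
    proof -
      have "(\<chi> i. x $ i mod int n1) = a"
      proof (rule vec_eqI)
        fix i
        have "x $ i mod int n1 = g i mod int n1" by (simp add: x_def mod_mod_cancel)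
        also have "\<dots> = a $ i mod int n1" using g[of i] by (simp add: cong_def)
        also have "\<dots> = a $ i" using p ab by (simp add: zn_vectors_def)
        finally show "(\<chi> i. x $ i mod int n1) $ i = a $ i" by simp
      qed
      moreover have "(\<chi> i. x $ i mod int n2) = b"
      proof (rule vec_eqI)
        fix i
        have "x $ i mod int n2 = g i mod int n2" by (simp add: x_def mod_mod_cancel)
        also have "\<dots> = b $ i mod int n2" using g[of i] by (simp add: cong_def)
        also have "\<dots> = b $ i" using p ab by (simp add: zn_vectors_def)
        finally show "(\<chi> i. x $ i mod int n2) $ i = b $ i" by simp
      qed
      ultimately show ?thesis by (simp add: f_def)
    qed
    then show "p \<in> f ` zn_vectors (n1*n2)" using xz ab by (metis rev_image_eqI)
  qed
  have bij: "bij_betw f (zn_vectors (n1*n2)) (zn_vectors n1 \<times> zn_vectors n2)"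
    using inj fin surj by (auto simp: bij_betw_def)
  have arcs: "(\<forall>i. y $ i = (M *v x) $ i mod int (n1*n2)) \<longleftrightarrow>
      ((\<forall>i. (\<chi> i. y $ i mod int n1) $ i = (M *v (\<chi> i. x $ i mod int n1)) $ i mod int n1) \<and>
       (\<forall>i. (\<chi> i. y $ i mod int n2) $ i = (M *v (\<chi> i. x $ i mod int n2)) $ i mod int n2))"
    if x: "x \<in> zn_vectors (n1*n2)" and y: "y \<in> zn_vectors (n1*n2)" for x y
  proof -
    have "\<And>i. y $ i = (M *v x) $ i mod int (n1*n2) \<longleftrightarrow>
       (y $ i mod int n1 = (M *v x) $ i mod int n1 \<and> y $ i mod int n2 = (M *v x) $ i mod int n2)"
      using scal_iff[OF assms(3)] y unfolding zn_vectors_def by auto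
    then show ?thesis by (auto simp: mv_mod)
  qed
  show ?thesis
    unfolding digraph_iso_def
  proof (intro exI conjI)
    show "bij_betw f (fst (move_graph M (n1 * n2))) (fst (tensor_product (move_graph M n1) (move_graph M n2)))"
      using bij by (simp add: move_graph_def tensor_product_def)
    show "\<forall>u\<in>fst (move_graph M (n1 * n2)). \<forall>w\<in>fst (move_graph M (n1 * n2)).
      ((u, w) \<in> snd (move_graph M (n1 * n2))) = ((f u, f w) \<in> snd (tensor_product (move_graph M n1) (move_graph M n2)))"
    proof (intro ballI)
      fix u w assume u: "u \<in> fst (move_graph M (n1 * n2))" and w: "w \<in> fst (move_graph M (n1 * n2))"
      then have u': "u \<in> zn_vectors (n1*n2)" and w': "w \<in> zn_vectors (n1*n2)" by (simp_all add: move_graph_def)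
      have fu: "f u \<in> zn_vectors n1 \<times> zn_vectors n2" and fw: "f w \<in> zn_vectors n1 \<times> zn_vectors n2"
        using fin u' w' by auto
      show "((u, w) \<in> snd (move_graph M (n1 * n2))) = ((f u, f w) \<in> snd (tensor_product (move_graph M n1) (move_graph M n2)))"
        using arcs[OF u' w'] u' w' fu fw by (simp add: move_graph_def tensor_product_def f_def)
    qed
  qed
qed

end
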